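(* Let $a=a_1a_2\cdots a_n$ be a signed permutation on $[n]$, let $\tilde s=(0,a_1,a_2,\ldots,a_n,-a_n,-a_{n-1},\ldots,-a_1)$ and $p_r=(-1,-2,\ldots,-n+1,-n,n,n-1,\ldots,2,1,0)$, both $(2n+1)$-cycles on $\{-n,\ldots,-1,0,1,\ldots,n\}$. Then $$d_r(a)\ \ge\ \frac{2n+1-C(p_r\tilde s)}{2}.$$
   Context: Permutations are multiplied as composition of maps, $(\sigma\tau)(x)=\sigma(\tau(x))$; $C(\pi)$ is the number of cycles of $\pi$, fixed points included. A signed permutation on $[n]$ is a sequence $a_1\cdots a_n$ with $a_k\in\{\pm1,\ldots,\pm n\}$ such that $|a_1|,\ldots,|a_n|$ is a permutation of $[n]$. A reversal $\varrho_{i,j}$ ($1\le i\le j\le n$) changes $a$ into $a_1\cdots a_{i-1}(-a_j)(-a_{j-1})\cdots(-a_i)a_{j+1}\cdots a_n$. The reversal distance $d_r(a)$ is the minimum number of reversals needed to transform $a$ into $12\cdots n$. *)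

theory Defs
  imports Complex_Main "HOL-Combinatorics.Cycles"
begin

definition signed_perm :: "nat \<Rightarrow> int list \<Rightarrow> bool" where
  "signed_perm n a \<longleftrightarrow> length a = n \<and> distinct (map abs a) \<and> set (map abs a) = {1..int n}"

text \<open>The reversal rho_{i,j} (1-indexed, intended for 1 <= i <= j <= n).\<close>
definition reversal :: "nat \<Rightarrow> nat \<Rightarrow> int list \<Rightarrow> int list" where
  "reversal i j a = take (i - 1) a @ map uminus (rev (take (j - i + 1) (drop (i - 1) a))) @ drop j a"

definition identity_sp :: "nat \<Rightarrow> int list" where
  "identity_sp n = map int [1..<n+1]"

definition reversal_distance :: "int list \<Rightarrow> nat" where
  "reversal_distance a = (LEAST k. \<exists>rs :: (nat \<times> nat) list. length rs = k \<and>
      (\<forall>(i, j) \<in> set rs. 1 \<le> i \<and> i \<le> j \<and> j \<le> length a) \<and>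
      fold (\<lambda>(i, j) b. reversal i j b) rs a = identity_sp (length a))"

text \<open>Number of cycles (orbits, fixed points included) of a permutation pi of S.\<close>
definition num_cycles :: "('a \<Rightarrow> 'a) \<Rightarrow> 'a set \<Rightarrow> nat" where
  "num_cycles \<pi> S = card ((\<lambda>x. {(\<pi> ^^ k) x | k. True}) ` S)"

definition s_tilde :: "int list \<Rightarrow> int \<Rightarrow> int" where
  "s_tilde a = cycle_of_list (0 # a @ map uminus (rev a))"

definition p_r :: "nat \<Rightarrow> int \<Rightarrow> int" where
  "p_r n = cycle_of_list (map (\<lambda>k. - int k) [1..<n+1] @ map int (rev [0..<n+1]))"

end

theory Submission
  imports Defs
begin


lemma cyc_nth:
  assumes "distinct cs" "i < length cs"
  shows "cycle_of_list cs (cs ! i) = cs ! (Suc i mod length cs)"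
proof -
  have "map (cycle_of_list cs ^^ 1) cs = rotate 1 cs" using cyclic_rotation[OF assms(1)] by blast
  hence "(map (cycle_of_list cs ^^ 1) cs) ! i = rotate 1 cs ! i" by simp
  thus ?thesis using assms(2) nth_rotate[of i cs 1] by (simp del: rotate1_length01 add: rotate1_rotate_swap)
qed

lemma cyc_rev_inv:
  assumes "distinct L"
  shows "cycle_of_list (rev L) \<circ> cycle_of_list L = id"
proof
  fix z
  show "(cycle_of_list (rev L) \<circ> cycle_of_list L) z = id z"
  proof (cases "z \<in> set L")
    case False thus ?thesis by (simp add: id_outside_supp)
  next
    case True
    then obtain j where j: "j < length L" "z = L ! j" by (metis in_set_conv_nth)
    define m where "m = length L"
    have d: "distinct (rev L)" using assms by simp
    have "cycle_of_list L z = L ! (Suc j mod m)" using cyc_nth[OF assms j(1)] j m_def by simp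
    also have "\<dots> = rev L ! (m - 1 - Suc j mod m)"
    proof -
      have "0 < m" using j(1) m_def by linarith
      hence "Suc j mod m < m" by simp
      thus ?thesis using m_def by (simp add: rev_nth)
    qed
    finally have 1: "cycle_of_list L z = rev L ! (m - 1 - Suc j mod m)" .
    have "cycle_of_list (rev L) (rev L ! (m - 1 - Suc j mod m)) = rev L ! (Suc (m - 1 - Suc j mod m) mod m)"
      using cyc_nth[OF d, of "m - 1 - Suc j mod m"] j(1) m_def by simp
    also have "\<dots> = L ! j"
    proof (cases "Suc j < m")
      case True
      hence "Suc (m - 1 - Suc j mod m) mod m = m - 1 - j" by simp
      thus ?thesis using j(1) m_def by (simp add: rev_nth)
    next
      case False
      have sj: "Suc j = m" using j(1) m_def False by linarith
      have e: "Suc (m - 1 - Suc j mod m) mod m = 0" using sj by simp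
      have "0 < m" using sj by simp
      have "rev L ! 0 = L ! (m - 1)" using \<open>0 < m\<close> m_def rev_nth[of 0 L] by simp
      moreover have jm: "j = m - 1" using sj by simp
      ultimately show ?thesis using e by simp
    qed
    finally show ?thesis using 1 j by simp
  qed
qed

definition orb :: "('a \<Rightarrow> 'a) \<Rightarrow> 'a \<Rightarrow> 'a set" where
  "orb h z = {(h ^^ k) z | k. True}"

lemma num_cycles_orb: "num_cycles h S = card (orb h ` S)"
  unfolding num_cycles_def orb_def by simp

lemma orb_self: "z \<in> orb h z"
  unfolding orb_def by (auto intro: exI[of _ 0])

lemma orb_eq:
  assumes "permutation h" "x \<in> orb h z"
  shows "orb h x = orb h z"
proof -
  obtain k where k: "x = (h ^^ k) z" using assms(2) unfolding orb_def by blast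
  obtain N where N: "h ^^ N = id" "N > k" using permutation_is_nilpotent'[OF assms(1)] by blast
  have z: "z = (h ^^ (N - k)) x"
  proof -
    have "(h ^^ (N - k)) x = (h ^^ (N - k + k)) z" using k by (simp add: funpow_add)
    also have "N - k + k = N" using N by simp
    finally show ?thesis using N by simp
  qed
  show ?thesis
  proof
    show "orb h x \<subseteq> orb h z"
    proof
      fix w assume "w \<in> orb h x"
      then obtain j where "w = (h ^^ j) x" unfolding orb_def by blast
      hence "w = (h ^^ (j + k)) z" using k by (simp add: funpow_add)
      thus "w \<in> orb h z" unfolding orb_def by blast
    qed
    show "orb h z \<subseteq> orb h x"
    proof
      fix w assume "w \<in> orb h z"
      then obtain j where "w = (h ^^ j) z" unfolding orb_def by blast
      hence "w = (h ^^ (j + (N - k))) x" using z by (simp add: funpow_add)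
      thus "w \<in> orb h x" unfolding orb_def by blast
    qed
  qed
qed

lemma orb_agree:
  assumes "\<forall>k. (h ^^ k) z \<notin> {x, y}" "h = g \<circ> transpose x y"
  shows "(h ^^ k) z = (g ^^ k) z"
proof (induction k)
  case 0 thus ?case by simp
next
  case (Suc k)
  have "(h ^^ Suc k) z = g (transpose x y ((h ^^ k) z))" using assms(2) by simp
  also have "\<dots> = g ((h ^^ k) z)" using assms(1) by (auto simp: transpose_def)
  finally show ?case using Suc by simp
qed

lemma cycles_transp:
  assumes "finite S" "g permutes S" "x \<in> S" "y \<in> S"
  shows "num_cycles (g \<circ> transpose x y) S \<le> num_cycles g S + 1"
proof -
  define h where "h = g \<circ> transpose x y"
  have hp: "h permutes S" unfolding h_def
    using permutes_compose[OF permutes_swap_id[OF assms(3,4)] assms(2)] by simp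
  have ph: "permutation h" using hp assms(1) permutation_permutes by blast
  have pg: "permutation g" using assms(1,2) permutation_permutes by blast
  define A where "A = {z \<in> S. x \<notin> orb h z \<and> y \<notin> orb h z}"
  have agA: "orb h z = orb g z" if "z \<in> A" for z
  proof -
    have nk: "\<forall>k. (h ^^ k) z \<notin> {x, y}" using that unfolding A_def orb_def by blast
    have "(h ^^ k) z = (g ^^ k) z" for k by (rule orb_agree[OF nk h_def])
    thus ?thesis unfolding orb_def by simp
  qed
  have sub: "orb h ` S \<subseteq> orb g ` A \<union> {orb h x, orb h y}"
  proof
    fix U assume "U \<in> orb h ` S"
    then obtain z where z: "z \<in> S" "U = orb h z" by blast
    show "U \<in> orb g ` A \<union> {orb h x, orb h y}"
    proof (cases "z \<in> A")
      case True thus ?thesis using agA z by auto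
    next
      case False
      hence "x \<in> orb h z \<or> y \<in> orb h z" using z unfolding A_def by blast
      thus ?thesis using orb_eq[OF ph] z by auto
    qed
  qed
  have card_2: "card {orb h x, orb h y} \<le> 2" by (cases "orb h x = orb h y") auto
  have fA: "finite (orb g ` A)" using assms(1) unfolding A_def by simp
  have "card (orb h ` S) \<le> card (orb g ` A \<union> {orb h x, orb h y})"
    using sub fA by (intro card_mono) auto
  also have "\<dots> \<le> card (orb g ` A) + card {orb h x, orb h y}"
    by (rule card_Un_le)
  also have "\<dots> \<le> card (orb g ` A) + 2"
    using card_2 by simp
  finally have 1: "card (orb h ` S) \<le> card (orb g ` A) + 2" .
  have nin: "orb g x \<notin> orb g ` A"
  proof
    assume "orb g x \<in> orb g ` A"
    then obtain z where "z \<in> A" "orb g x = orb g z" by blast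
    hence "x \<in> orb h z" using agA orb_self by metis
    thus False using \<open>z \<in> A\<close> unfolding A_def by blast
  qed
  have "card (orb g ` A) + 1 = card (insert (orb g x) (orb g ` A))"
    using nin fA by simp
  also have "\<dots> \<le> card (orb g ` S)"
    using assms(1,3) unfolding A_def by (intro card_mono) auto
  finally show ?thesis using 1 h_def num_cycles_orb[of h S] num_cycles_orb[of g S] by simp
qed




definition LL :: "int list \<Rightarrow> int list" where
  "LL a = 0 # a @ map uminus (rev a)"

lemma s_tilde_LL: "s_tilde a = cycle_of_list (LL a)"
  unfolding s_tilde_def LL_def by simp

lemma len_LL: "length (LL a) = 2 * length a + 1"
  unfolding LL_def by simp

lemma LL_nth:
  assumes "k < 2 * length a + 1"
  shows "LL a ! k = (if k = 0 then 0 else if k \<le> length a then a ! (k - 1)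
                     else - (a ! (2 * length a - k)))"
proof -
  consider "k = 0" | "1 \<le> k \<and> k \<le> length a" | "length a < k" by linarith
  thus ?thesis
  proof cases
    case 1 thus ?thesis unfolding LL_def by simp
  next
    case 2
    hence "LL a ! k = (a @ map uminus (rev a)) ! (k - 1)" unfolding LL_def
      by (cases k) auto
    also have "\<dots> = a ! (k - 1)"
    proof -
      have "k - 1 < length a" using 2 by linarith
      thus ?thesis by (simp add: nth_append)
    qed
    finally show ?thesis using 2 by simp
  next
    case 3
    hence "LL a ! k = (a @ map uminus (rev a)) ! (k - 1)" unfolding LL_def
      by (cases k) auto
    also have "\<dots> = map uminus (rev a) ! (k - 1 - length a)"
    proof -
      have "\<not> k - 1 < length a" using 3 by linarith
      thus ?thesis by (simp add: nth_append)
    qed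
    also have "\<dots> = - (rev a ! (k - 1 - length a))" using 3 assms by simp
    also have "\<dots> = - (a ! (length a - 1 - (k - 1 - length a)))" using 3 assms by (simp add: rev_nth)
    also have "length a - 1 - (k - 1 - length a) = 2 * length a - k" using 3 assms by simp
    finally show ?thesis using 3 by simp
  qed
qed

lemma sp_props:
  assumes "signed_perm n a"
  shows "length a = n" "distinct a" "0 \<notin> set a" "inj_on abs (set a)"
proof -
  show "length a = n" using assms unfolding signed_perm_def by simp
  show "distinct a" using assms unfolding signed_perm_def by (simp add: distinct_map)
  show "inj_on abs (set a)" using assms unfolding signed_perm_def by (simp add: distinct_map)
  have b: "\<And>x. x \<in> set a \<Longrightarrow> 1 \<le> abs x \<and> abs x \<le> int n"
    using assms unfolding signed_perm_def by auto
  show "0 \<notin> set a" using b by fastforce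
qed

lemma sp_abs:
  assumes "signed_perm n a" "x \<in> set a"
  shows "1 \<le> abs x \<and> abs x \<le> int n"
  using assms unfolding signed_perm_def by auto

lemma sp_distinct:
  assumes "signed_perm n a"
  shows "distinct (LL a)"
proof -
  note P = sp_props[OF assms]
  have nx: "False" if "- x \<in> set a" "x \<in> set a" for x
  proof -
    have "abs x = abs (-x)" by simp
    hence "x = -x" using P(4) that by (metis inj_on_eq_iff)
    thus False using that P(3) by simp
  qed
  moreover have "distinct (map uminus (rev a))" using P(2) by (simp add: distinct_map)
  ultimately show ?thesis unfolding LL_def using P(2,3) by auto
qed

lemma sp_set:
  assumes "signed_perm n a"
  shows "set (LL a) = {- int n..int n}"
proof
  note P = sp_props[OF assms]
  show "set (LL a) \<subseteq> {- int n..int n}" unfolding LL_def using sp_abs[OF assms] by force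
  show "{- int n..int n} \<subseteq> set (LL a)"
  proof
    fix z assume z: "z \<in> {- int n..int n}"
    show "z \<in> set (LL a)"
    proof (cases "z = 0")
      case True thus ?thesis unfolding LL_def by simp
    next
      case False
      hence "abs z \<in> {1..int n}" using z by auto
      hence "abs z \<in> abs ` set a" using assms unfolding signed_perm_def by simp
      then obtain w where "w \<in> set a" "abs z = abs w" by auto
      hence "z = w \<or> z = - w" by (auto simp: abs_if split: if_splits)
      thus ?thesis unfolding LL_def using \<open>w \<in> set a\<close> by auto
    qed
  qed
qed

lemma sp_permutes:
  assumes "signed_perm n a"
  shows "s_tilde a permutes {- int n..int n}"
  using cycle_permutes[of "LL a"] sp_set[OF assms] s_tilde_LL by simp

lemma pr_permutes: "p_r n permutes {- int n..int n}"
proof -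
  have "set (map (\<lambda>k. - int k) [1..<n+1] @ map int (rev [0..<n+1])) = {- int n..int n}"
  proof (rule set_eqI, rule iffI)
    fix z assume "z \<in> set (map (\<lambda>k. - int k) [1..<n+1] @ map int (rev [0..<n+1]))"
    thus "z \<in> {- int n..int n}" by auto
  next
    fix z assume z: "z \<in> {- int n..int n}"
    show "z \<in> set (map (\<lambda>k. - int k) [1..<n+1] @ map int (rev [0..<n+1]))"
    proof (cases "z < 0")
      case True
      have "z = - int (nat (-z))" "nat (-z) \<in> set [1..<n+1]" using z True by auto
      hence "z \<in> (\<lambda>k. - int k) ` set [1..<n+1]" by (rule image_eqI)
      thus ?thesis by (simp only: set_append set_map) blast
    next
      case False
      have "z = int (nat z)" "nat z \<in> set (rev [0..<n+1])" using z False by auto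
      hence "z \<in> int ` set (rev [0..<n+1])" by (rule image_eqI)
      thus ?thesis by (simp only: set_append set_map) blast
    qed
  qed
  thus ?thesis unfolding p_r_def
    using cycle_permutes[of "map (\<lambda>k. - int k) [1..<n+1] @ map int (rev [0..<n+1])"] by simp
qed

lemma sp_identity: "signed_perm n (identity_sp n)"
proof -
  have 1: "map abs (map int [1..<n+1]) = map int [1..<n+1]" by (induct n) auto
  have 2: "set (map int [1..<n+1]) = {1..int n}"
  proof (rule set_eqI, rule iffI)
    fix x assume "x \<in> set (map int [1..<n+1])" thus "x \<in> {1..int n}" by auto
  next
    fix x assume "x \<in> {1..int n}"
    hence "x = int (nat x)" "nat x \<in> set [1..<n+1]" by auto
    hence "x \<in> int ` set [1..<n+1]" by (rule image_eqI)
    thus "x \<in> set (map int [1..<n+1])" by (simp only: set_map)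
  qed
  have 3: "distinct (map int [1..<n+1])" by (simp add: distinct_map)
  show ?thesis unfolding signed_perm_def identity_sp_def 1
  proof (intro conjI)
    show "length (map int [1..<n+1]) = n" by simp
  qed (rule 3, rule 2)
qed

lemma pr_rev: "p_r n = cycle_of_list (rev (LL (identity_sp n)))"
proof -
  have "[0..<n+1] = 0 # [1..<n+1]" by (simp add: upt_rec)
  thus ?thesis unfolding p_r_def LL_def identity_sp_def by (simp add: rev_map o_def)
qed

lemma num_cycles_id: "finite S \<Longrightarrow> num_cycles id S = card S"
proof -
  assume "finite S"
  have "orb id z = {z}" for z :: 'a unfolding orb_def by simp
  hence "orb id ` S = (\<lambda>z. {z}) ` S" by simp
  thus ?thesis using num_cycles_orb[of id S] by (simp add: card_image inj_on_def)
qed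

lemma id_cycles: "num_cycles (p_r n \<circ> s_tilde (identity_sp n)) {- int n..int n} = 2 * n + 1"
proof -
  have "p_r n \<circ> s_tilde (identity_sp n) = id"
    using pr_rev cyc_rev_inv[OF sp_distinct[OF sp_identity]] s_tilde_LL by simp
  moreover have "card {- int n..int n} = 2 * n + 1" by simp
  ultimately show ?thesis using num_cycles_id[of "{- int n..int n}"] by simp
qed




lemma len_reversal:
  assumes "1 \<le> p" "p \<le> q" "q \<le> length a"
  shows "length (reversal p q a) = length a"
  using assms unfolding reversal_def by simp

lemma reversal_nth:
  assumes "1 \<le> p" "p \<le> q" "q \<le> length a" "i < length a"
  shows "reversal p q a ! i = (if p - 1 \<le> i \<and> i \<le> q - 1 then - a ! (p + q - 2 - i) else a ! i)"
proof -
  define T where "T = take (q - p + 1) (drop (p - 1) a)"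
  have lT: "length T = q - p + 1" unfolding T_def using assms by simp
  have lt: "length (take (p - 1) a) = p - 1" using assms by simp
  have R: "reversal p q a = take (p - 1) a @ map uminus (rev T) @ drop q a"
    unfolding reversal_def T_def by simp
  consider "i < p - 1" | "p - 1 \<le> i \<and> i \<le> q - 1" | "q \<le> i" by linarith
  thus ?thesis
  proof cases
    case 1 thus ?thesis unfolding R using lt by (simp add: nth_append)
  next
    case 2
    define j where "j = i - (p - 1)"
    have hj: "j < length T" using lT 2 assms unfolding j_def by linarith
    have "reversal p q a ! i = (map uminus (rev T) @ drop q a) ! j"
      unfolding R j_def using lt 2 by (simp add: nth_append)
    also have "\<dots> = map uminus (rev T) ! j"
      using hj by (simp add: nth_append)
    also have "\<dots> = - (rev T ! j)" using hj by simp
    also have "rev T ! j = T ! (length T - Suc j)" using hj by (rule rev_nth)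
    also have "length T - Suc j = q - 1 - i" using lT 2 assms unfolding j_def by linarith
    also have "T ! (q - 1 - i) = a ! (p - 1 + (q - 1 - i))"
    proof -
      have "q - 1 - i < q - p + 1" using 2 assms by linarith
      moreover have "p - 1 \<le> length a" using assms by linarith
      ultimately show ?thesis unfolding T_def by simp
    qed
    also have "p - 1 + (q - 1 - i) = p + q - 2 - i" using 2 assms by linarith
    finally show ?thesis using 2 by simp
  next
    case 3
    have ii: "i = length (take (p - 1) a) + (length (map uminus (rev T)) + (i - q))"
      using lt lT 3 assms by simp
    have "reversal p q a ! i = (take (p - 1) a @ map uminus (rev T) @ drop q a) !
        (length (take (p - 1) a) + (length (map uminus (rev T)) + (i - q)))"
      using R ii by metis
    also have "\<dots> = drop q a ! (i - q)" by (simp only: nth_append_length_plus)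
    also have "\<dots> = a ! i" using 3 assms by simp
    finally have "reversal p q a ! i = a ! i" .
    moreover have "\<not> (i \<le> q - 1)" using 3 assms by linarith
    ultimately show ?thesis by simp
  qed
qed

lemma sp_reversal:
  assumes "signed_perm n a" "1 \<le> p" "p \<le> q" "q \<le> n"
  shows "signed_perm n (reversal p q a)"
proof -
  define A where "A = map abs a"
  have la: "length a = n" using assms(1) signed_perm_def by simp
  define X where "X = take (p - 1) a"
  define T where "T = take (q - p + 1) (drop (p - 1) a)"
  define Z where "Z = drop q a"
  have R: "reversal p q a = X @ map uminus (rev T) @ Z"
    unfolding reversal_def X_def T_def Z_def by simp
  have Z2: "Z = drop (q - p + 1) (drop (p - 1) a)" unfolding Z_def using assms by simp
  have a_eq: "X @ T @ Z = a" unfolding X_def T_def Z2 by (simp only: append_take_drop_id)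
  have mm: "map abs (map uminus (rev T)) = rev (map abs T)" by (induct T) auto
  have "mset (map abs (reversal p q a)) = mset (map abs (X @ T @ Z))"
    unfolding R map_append mm by simp
  hence e: "mset (map abs (reversal p q a)) = mset A" unfolding a_eq A_def .
  have d: "distinct (map abs a)" and s: "set (map abs a) = {1..int n}"
    using assms(1) unfolding signed_perm_def by auto
  have d': "distinct (map abs (reversal p q a))"
    using mset_eq_imp_distinct_iff[OF e[unfolded A_def]] d by blast
  have s': "set (map abs (reversal p q a)) = {1..int n}"
    by (rule trans[OF mset_eq_setD[OF e[unfolded A_def]] s])
  have l': "length (reversal p q a) = n" using len_reversal assms la by simp
  show ?thesis unfolding signed_perm_def using d' s' l' by blast
qed




definition phi :: "nat \<Rightarrow> nat \<Rightarrow> nat \<Rightarrow> nat \<Rightarrow> nat" where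
  "phi n p q k = (if p \<le> k \<and> k \<le> q then 2 * n + 1 - p - q + k
     else if 2 * n + 1 - q \<le> k \<and> k \<le> 2 * n + 1 - p then k + p + q - (2 * n + 1) else k)"

definition psi :: "nat \<Rightarrow> nat \<Rightarrow> nat \<Rightarrow> nat \<Rightarrow> nat" where
  "psi n p q i = transpose (p - 1) (2 * n - q) (transpose q (2 * n + 1 - p) i)"

lemma phi_lt: "1 \<le> p \<Longrightarrow> p \<le> q \<Longrightarrow> q \<le> n \<Longrightarrow> k < 2 * n + 1 \<Longrightarrow> phi n p q k < 2 * n + 1"
  unfolding phi_def by auto

lemma psi_lt: "1 \<le> p \<Longrightarrow> p \<le> q \<Longrightarrow> q \<le> n \<Longrightarrow> i < 2 * n + 1 \<Longrightarrow> psi n p q i < 2 * n + 1"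
  unfolding psi_def transpose_def by auto

lemma arith_key:
  assumes "1 \<le> p" "p \<le> q" "q \<le> n" "k < 2 * n + 1"
  shows "phi n p q (Suc k mod (2 * n + 1)) = Suc (psi n p q (phi n p q k)) mod (2 * n + 1)"
proof -
  consider (R1) "k < p - 1" | (R2) "k = p - 1" | (R3) "p \<le> k \<and> k < q" | (R4) "k = q"
    | (R5) "q < k \<and> k < 2 * n - q" | (R6) "q < k \<and> k = 2 * n - q"
    | (R7) "2 * n - q < k \<and> k < 2 * n + 1 - p" | (R8) "k = 2 * n + 1 - p"
    | (R9) "2 * n + 1 - p < k" using assms by linarith
  thus ?thesis
  proof cases
    case R1
    hence "phi n p q k = k" "Suc k mod (2 * n + 1) = Suc k" "phi n p q (Suc k) = Suc k" "psi n p q k = k"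
      using assms unfolding phi_def psi_def transpose_def by auto
    thus ?thesis by simp
  next
    case R2
    hence "phi n p q k = k" "Suc k mod (2 * n + 1) = Suc k" "phi n p q (Suc k) = 2 * n + 1 - q"
       "psi n p q k = 2 * n - q"
      using assms unfolding phi_def psi_def transpose_def by auto
    moreover have "Suc (2 * n - q) mod (2 * n + 1) = 2 * n + 1 - q" using assms by simp
    ultimately show ?thesis by simp
  next
    case R3
    hence "phi n p q k = 2 * n + 1 - p - q + k" "Suc k mod (2 * n + 1) = Suc k"
      "phi n p q (Suc k) = 2 * n + 1 - p - q + Suc k"
      "psi n p q (2 * n + 1 - p - q + k) = 2 * n + 1 - p - q + k"
      using assms unfolding phi_def psi_def transpose_def by auto
    moreover have "Suc (2 * n + 1 - p - q + k) < 2 * n + 1" using assms R3 by arith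
    hence "Suc (2 * n + 1 - p - q + k) mod (2 * n + 1) = Suc (2 * n + 1 - p - q + k)" by (rule mod_less)
    ultimately show ?thesis by simp
  next
    case R4
    show ?thesis
    proof (cases "q = n")
      case True
      hence "phi n p q k = 2 * n + 1 - p" "Suc k mod (2 * n + 1) = Suc k"
        "phi n p q (Suc k) = p" "psi n p q (2 * n + 1 - p) = p - 1"
        using assms R4 unfolding phi_def psi_def transpose_def by auto
      moreover have "Suc (p - 1) mod (2 * n + 1) = p" using assms by simp
      ultimately show ?thesis by simp
    next
      case False
      hence "phi n p q k = 2 * n + 1 - p" "Suc k mod (2 * n + 1) = Suc k"
        "phi n p q (Suc k) = Suc q" "psi n p q (2 * n + 1 - p) = q"
        using assms R4 unfolding phi_def psi_def transpose_def by auto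
      moreover have "Suc q mod (2 * n + 1) = Suc q" using assms by simp
      ultimately show ?thesis using R4 by simp
    qed
  next
    case R5
    hence "phi n p q k = k" "Suc k mod (2 * n + 1) = Suc k" "phi n p q (Suc k) = Suc k" "psi n p q k = k"
      using assms unfolding phi_def psi_def transpose_def by auto
    thus ?thesis by simp
  next
    case R6
    hence "phi n p q k = k" "Suc k mod (2 * n + 1) = Suc k" "phi n p q (Suc k) = p" "psi n p q k = p - 1"
      using assms unfolding phi_def psi_def transpose_def by auto
    moreover have "Suc (p - 1) mod (2 * n + 1) = p" using assms by simp
    ultimately show ?thesis by simp
  next
    case R7
    hence "phi n p q k = k + p + q - (2 * n + 1)" "Suc k mod (2 * n + 1) = Suc k"
      "phi n p q (Suc k) = Suc k + p + q - (2 * n + 1)"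
      "psi n p q (k + p + q - (2 * n + 1)) = k + p + q - (2 * n + 1)"
      using assms unfolding phi_def psi_def transpose_def by auto
    moreover have "Suc (k + p + q - (2 * n + 1)) < 2 * n + 1" using assms R7 by arith
    hence "Suc (k + p + q - (2 * n + 1)) mod (2 * n + 1) = Suc (k + p + q - (2 * n + 1))" by (rule mod_less)
    moreover have "Suc (k + p + q - (2 * n + 1)) = Suc k + p + q - (2 * n + 1)" using assms R7 by arith
    ultimately show ?thesis by simp
  next
    case R8
    show ?thesis
    proof (cases "p = 1")
      case True
      hence "phi n p q k = q" "Suc k mod (2 * n + 1) = 0" "phi n p q 0 = 0" "psi n p q q = 2 * n + 1 - p"
        using assms R8 unfolding phi_def psi_def transpose_def by auto
      moreover have "Suc (2 * n + 1 - p) mod (2 * n + 1) = 0" using True by simp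
      ultimately show ?thesis by simp
    next
      case False
      hence "phi n p q k = q" "Suc k mod (2 * n + 1) = Suc k" "phi n p q (Suc k) = Suc k"
        "psi n p q q = 2 * n + 1 - p"
        using assms R8 unfolding phi_def psi_def transpose_def by auto
      moreover have "Suc (2 * n + 1 - p) mod (2 * n + 1) = Suc k" using False assms R8 by simp
      ultimately show ?thesis by simp
    qed
  next
    case R9
    show ?thesis
    proof (cases "k = 2 * n")
      case True
      hence "phi n p q k = k" "Suc k mod (2 * n + 1) = 0" "phi n p q 0 = 0" "psi n p q k = k"
        using assms R9 unfolding phi_def psi_def transpose_def by auto
      thus ?thesis using True by simp
    next
      case False
      hence "phi n p q k = k" "Suc k mod (2 * n + 1) = Suc k" "phi n p q (Suc k) = Suc k" "psi n p q k = k"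
        using assms R9 unfolding phi_def psi_def transpose_def by auto
      thus ?thesis by simp
    qed
  qed
qed

lemma tr_nth:
  assumes "distinct L" "b < length L" "c < length L" "i < length L"
  shows "transpose (L ! b) (L ! c) (L ! i) = L ! (transpose b c i)"
  using assms by (auto simp: transpose_def nth_eq_iff_index_eq)

lemma LL_reversal_nth:
  assumes sp: "signed_perm n a" and pq: "1 \<le> p" "p \<le> q" "q \<le> n" and k: "k < 2 * n + 1"
  shows "LL (reversal p q a) ! k = LL a ! phi n p q k"
proof -
  have la: "length a = n" using sp signed_perm_def by simp
  define a' where "a' = reversal p q a"
  have la': "length a' = n" unfolding a'_def using len_reversal pq la by simp
  define f where "f = phi n p q k"
  have fl: "f < 2 * n + 1" unfolding f_def using phi_lt pq k by blast
  have L1: "LL a' ! k = (if k = 0 then 0 else if k \<le> n then a' ! (k - 1) else - (a' ! (2 * n - k)))"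
    using LL_nth[of k a'] la' k by simp
  have L2: "LL a ! f = (if f = 0 then 0 else if f \<le> n then a ! (f - 1) else - (a ! (2 * n - f)))"
    using LL_nth[of f a] la fl by simp
  have RN: "a' ! i = (if p - 1 \<le> i \<and> i \<le> q - 1 then - a ! (p + q - 2 - i) else a ! i)" if "i < n" for i
    unfolding a'_def using reversal_nth[of p q a i] pq la that by simp
  consider "k = 0" | "1 \<le> k \<and> k \<le> n \<and> p \<le> k \<and> k \<le> q" | "1 \<le> k \<and> k \<le> n \<and> \<not> (p \<le> k \<and> k \<le> q)"
    | "n < k \<and> 2 * n + 1 - q \<le> k \<and> k \<le> 2 * n + 1 - p" | "n < k \<and> \<not> (2 * n + 1 - q \<le> k \<and> k \<le> 2 * n + 1 - p)"
    by linarith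
  hence "LL a' ! k = LL a ! f"
  proof cases
    case 1
    have "f = 0" unfolding f_def phi_def using 1 pq by auto
    thus ?thesis using L1 L2 1 by simp
  next
    case 2
    have ff: "f = 2 * n + 1 - p - q + k" unfolding f_def phi_def using 2 by simp
    have c: "p - 1 \<le> k - 1 \<and> k - 1 \<le> q - 1" "k - 1 < n" using 2 by linarith+
    have e: "a' ! (k - 1) = - a ! (p + q - 2 - (k - 1))" using RN[OF c(2)] c(1) by (simp only: simp_thms if_True)
    have idx: "2 * n - f = p + q - 2 - (k - 1)" using ff 2 pq by simp
    have nf: "\<not> f \<le> n" "f \<noteq> 0" using ff 2 pq by auto
    have "LL a' ! k = a' ! (k - 1)" using L1 2 by simp
    also have "\<dots> = - a ! (p + q - 2 - (k - 1))" by (rule e)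
    also have "\<dots> = - a ! (2 * n - f)" using idx by simp
    also have "\<dots> = LL a ! f" using L2 nf by simp
    finally show ?thesis .
  next
    case 3
    have ff: "f = k" unfolding f_def phi_def using 3 pq by auto
    have c: "\<not> (p - 1 \<le> k - 1 \<and> k - 1 \<le> q - 1)" "k - 1 < n" using 3 pq by arith+
    have e: "a' ! (k - 1) = a ! (k - 1)" using RN[OF c(2)] c(1) by (simp only: simp_thms if_False)
    have "LL a' ! k = a' ! (k - 1)" using L1 3 by simp
    also have "\<dots> = a ! (k - 1)" by (rule e)
    also have "\<dots> = LL a ! f" using L2 3 ff by simp
    finally show ?thesis .
  next
    case 4
    have ff: "f = k + p + q - (2 * n + 1)" unfolding f_def phi_def using 4 pq by auto
    have c: "p - 1 \<le> 2 * n - k \<and> 2 * n - k \<le> q - 1" "2 * n - k < n" using 4 pq by linarith+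
    have e: "a' ! (2 * n - k) = - a ! (p + q - 2 - (2 * n - k))" using RN[OF c(2)] c(1) by (simp only: simp_thms if_True)
    have idx: "f - 1 = p + q - 2 - (2 * n - k)" using ff 4 pq k by arith
    have nf: "f \<le> n" "f \<noteq> 0" using ff 4 pq by auto
    have "LL a' ! k = - (a' ! (2 * n - k))" using L1 4 by simp
    also have "\<dots> = - (- a ! (p + q - 2 - (2 * n - k)))" by (simp only: e)
    also have "\<dots> = a ! (f - 1)" using idx by simp
    also have "\<dots> = LL a ! f" using L2 nf by simp
    finally show ?thesis .
  next
    case 5
    have ff: "f = k" unfolding f_def phi_def using 5 pq by auto
    have c: "\<not> (p - 1 \<le> 2 * n - k \<and> 2 * n - k \<le> q - 1)" "2 * n - k < n" using 5 pq k by arith+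
    have e: "a' ! (2 * n - k) = a ! (2 * n - k)" using RN[OF c(2)] c(1) by (simp only: simp_thms if_False)
    have "LL a' ! k = - (a' ! (2 * n - k))" using L1 5 by simp
    also have "\<dots> = - (a ! (2 * n - k))" by (simp only: e)
    also have "\<dots> = LL a ! f" using L2 5 ff by simp
    finally show ?thesis .
  qed
  thus ?thesis unfolding a'_def f_def .
qed

lemma s_tilde_reversal:
  assumes sp: "signed_perm n a" and pq: "1 \<le> p" "p \<le> q" "q \<le> n"
  shows "s_tilde (reversal p q a) = s_tilde a \<circ> transpose (LL a ! (p - 1)) (LL a ! (2 * n - q))
            \<circ> transpose (LL a ! q) (LL a ! (2 * n + 1 - p))"
proof (rule ext)
  fix z
  define a' where "a' = reversal p q a"
  define L where "L = LL a"
  define L' where "L' = LL a'"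
  define m where "m = 2 * n + 1"
  have sp': "signed_perm n a'" unfolding a'_def using sp_reversal sp pq by blast
  have la: "length a = n" using sp signed_perm_def by simp
  have la': "length a' = n" using sp' signed_perm_def by simp
  have dL: "distinct L" unfolding L_def using sp_distinct sp by blast
  have lL: "length L = m" unfolding L_def m_def using len_LL la by simp
  have lL': "length L' = m" unfolding L'_def m_def using len_LL la' by simp
  have sL: "set L = {- int n..int n}" unfolding L_def using sp_set sp by blast
  have sL': "set L' = {- int n..int n}" unfolding L'_def using sp_set sp' by blast
  have dL': "distinct L'" unfolding L'_def using sp_distinct sp' by blast
  have ix: "p - 1 < m" "2 * n - q < m" "q < m" "2 * n + 1 - p < m" unfolding m_def using pq by auto
  have S1: "s_tilde a = cycle_of_list L" unfolding L_def by (rule s_tilde_LL)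
  have S2: "s_tilde a' = cycle_of_list L'" unfolding L'_def by (rule s_tilde_LL)
  show "s_tilde a' z = (s_tilde a \<circ> transpose (LL a ! (p - 1)) (LL a ! (2 * n - q))
            \<circ> transpose (LL a ! q) (LL a ! (2 * n + 1 - p))) z"
  proof (cases "z \<in> set L")
    case False
    have "z \<notin> set L'" using False sL sL' by simp
    hence l: "s_tilde a' z = z" unfolding S2 by (rule id_outside_supp)
    have "L ! (p - 1) \<in> set L" "L ! (2 * n - q) \<in> set L" "L ! q \<in> set L" "L ! (2 * n + 1 - p) \<in> set L"
      using ix lL by auto
    hence "z \<noteq> L ! (p - 1)" "z \<noteq> L ! (2 * n - q)" "z \<noteq> L ! q" "z \<noteq> L ! (2 * n + 1 - p)"
      using False by auto
    hence "(transpose (L ! (p - 1)) (L ! (2 * n - q)) \<circ> transpose (L ! q) (L ! (2 * n + 1 - p))) z = z"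
      by (simp add: transpose_def)
    moreover have "s_tilde a z = z" unfolding S1 using False by (rule id_outside_supp)
    ultimately show ?thesis using l unfolding L_def by simp
  next
    case True
    hence "z \<in> set L'" using sL sL' by simp
    then obtain k where k: "k < m" "z = L' ! k" using lL' by (metis in_set_conv_nth)
    have km: "k < 2 * n + 1" using k m_def by simp
    have sk: "Suc k mod m < m" using k by simp
    have "s_tilde a' z = L' ! (Suc k mod m)" unfolding S2 k(2) using cyc_nth[OF dL', of k] k lL' by simp
    also have "\<dots> = L ! phi n p q (Suc k mod m)"
      unfolding L'_def L_def a'_def using LL_reversal_nth[OF sp pq, of "Suc k mod m"] sk m_def by simp
    finally have lhs: "s_tilde a' z = L ! phi n p q (Suc k mod m)" .
    define f where "f = phi n p q k"
    have fl: "f < m" unfolding f_def m_def using phi_lt[OF pq km] .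
    have zf: "z = L ! f" unfolding k(2) f_def L'_def L_def a'_def using LL_reversal_nth[OF sp pq km] .
    have t1: "transpose (L ! q) (L ! (2 * n + 1 - p)) (L ! f) = L ! (transpose q (2 * n + 1 - p) f)"
      using tr_nth[OF dL] ix fl lL by simp
    have tl: "transpose q (2 * n + 1 - p) f < m" using ix fl by (simp add: transpose_def)
    have t2: "transpose (L ! (p - 1)) (L ! (2 * n - q)) (L ! (transpose q (2 * n + 1 - p) f))
       = L ! (psi n p q f)"
      unfolding psi_def using tr_nth[OF dL] ix tl lL by simp
    have pl: "psi n p q f < m" unfolding m_def using psi_lt[OF pq] fl m_def by simp
    have "(s_tilde a \<circ> transpose (LL a ! (p - 1)) (LL a ! (2 * n - q))
            \<circ> transpose (LL a ! q) (LL a ! (2 * n + 1 - p))) z = cycle_of_list L (L ! psi n p q f)"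
      unfolding S1 zf using t1 t2 L_def by simp
    also have "\<dots> = L ! (Suc (psi n p q f) mod m)" using cyc_nth[OF dL pl[folded lL]] lL by simp
    also have "\<dots> = L ! phi n p q (Suc k mod m)"
      using arith_key[OF pq km] unfolding f_def m_def by simp
    finally show ?thesis using lhs by simp
  qed
qed




lemma cycles_step:
  assumes sp: "signed_perm n a" and pq: "1 \<le> p" "p \<le> q" "q \<le> n"
  shows "num_cycles (p_r n \<circ> s_tilde (reversal p q a)) {- int n..int n}
          \<le> num_cycles (p_r n \<circ> s_tilde a) {- int n..int n} + 2"
proof -
  define S where "S = {- int n..int n}"
  define g where "g = p_r n \<circ> s_tilde a"
  have fS: "finite S" unfolding S_def by simp
  have gp: "g permutes S" unfolding g_def S_def
    using permutes_compose[OF sp_permutes[OF sp] pr_permutes] .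
  have la: "length a = n" using sp signed_perm_def by simp
  have sL: "set (LL a) = S" unfolding S_def using sp_set sp by blast
  have inS: "LL a ! i \<in> S" if "i < 2 * n + 1" for i
    using that sL len_LL[of a] la nth_mem by (metis)
  define u1 where "u1 = LL a ! (p - 1)"
  define u3 where "u3 = LL a ! (2 * n - q)"
  define u2 where "u2 = LL a ! q"
  define u4 where "u4 = LL a ! (2 * n + 1 - p)"
  have us: "u1 \<in> S" "u2 \<in> S" "u3 \<in> S" "u4 \<in> S"
    unfolding u1_def u2_def u3_def u4_def using inS pq by auto
  have eq: "p_r n \<circ> s_tilde (reversal p q a) = (g \<circ> transpose u1 u3) \<circ> transpose u2 u4"
    unfolding g_def u1_def u2_def u3_def u4_def s_tilde_reversal[OF sp pq] by (simp add: o_assoc)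
  have gp1: "(g \<circ> transpose u1 u3) permutes S"
    using permutes_compose[OF permutes_swap_id[OF us(1,3)] gp] .
  have "num_cycles ((g \<circ> transpose u1 u3) \<circ> transpose u2 u4) S \<le> num_cycles (g \<circ> transpose u1 u3) S + 1"
    by (rule cycles_transp[OF fS gp1 us(2,4)])
  also have "num_cycles (g \<circ> transpose u1 u3) S \<le> num_cycles g S + 1"
    by (rule cycles_transp[OF fS gp us(1,3)])
  finally show ?thesis using eq unfolding g_def S_def by simp
qed

lemma bound:
  assumes "signed_perm n a" "\<forall>(i, j) \<in> set rs. 1 \<le> i \<and> i \<le> j \<and> j \<le> length a"
    "fold (\<lambda>(i, j) b. reversal i j b) rs a = identity_sp (length a)"
  shows "2 * n + 1 \<le> num_cycles (p_r n \<circ> s_tilde a) {- int n..int n} + 2 * length rs"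
  using assms
proof (induction rs arbitrary: a)
  case Nil
  have "length a = n" using Nil(1) signed_perm_def by simp
  hence ha: "a = identity_sp n" using Nil(3) by simp
  have eq: "num_cycles (p_r n \<circ> s_tilde a) {- int n..int n} = 2 * n + 1"
    unfolding ha by (rule id_cycles)
  show ?case by (simp only: list.size(3) mult_0_right add_0_right eq order_refl)
next
  case (Cons r rs)
  obtain p q where r: "r = (p, q)" by (cases r)
  have la: "length a = n" using Cons(2) signed_perm_def by simp
  have pq: "1 \<le> p" "p \<le> q" "q \<le> n" using Cons(3) r la by auto
  define a' where "a' = reversal p q a"
  have sp': "signed_perm n a'" unfolding a'_def using sp_reversal Cons(2) pq by blast
  have la': "length a' = n" using sp' signed_perm_def by simp
  have "\<forall>(i, j) \<in> set rs. 1 \<le> i \<and> i \<le> j \<and> j \<le> length a'" using Cons(3) la la' by auto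
  moreover have "fold (\<lambda>(i, j) b. reversal i j b) rs a' = identity_sp (length a')"
    using Cons(4) r la la' unfolding a'_def by simp
  ultimately have "2 * n + 1 \<le> num_cycles (p_r n \<circ> s_tilde a') {- int n..int n} + 2 * length rs"
    using Cons.IH sp' by blast
  moreover have "num_cycles (p_r n \<circ> s_tilde a') {- int n..int n}
          \<le> num_cycles (p_r n \<circ> s_tilde a) {- int n..int n} + 2"
    unfolding a'_def by (rule cycles_step[OF Cons(2) pq])
  moreover have "length (r # rs) = Suc (length rs)" by simp
  ultimately show ?case by linarith
qed

lemma reversal_append:
  assumes "1 \<le> i" "i \<le> j" "j \<le> length c"
  shows "reversal i j (c @ d) = reversal i j c @ d"
  using assms unfolding reversal_def by simp

lemma fold_append:
  assumes "\<forall>(i, j) \<in> set rs. 1 \<le> i \<and> i \<le> j \<and> j \<le> length c"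
  shows "fold (\<lambda>(i, j) b. reversal i j b) rs (c @ d) = fold (\<lambda>(i, j) b. reversal i j b) rs c @ d"
  using assms
proof (induction rs arbitrary: c)
  case Nil thus ?case by simp
next
  case (Cons r rs)
  obtain i j where r: "r = (i, j)" by (cases r)
  have ij: "1 \<le> i" "i \<le> j" "j \<le> length c" using Cons(2) r by auto
  have l: "length (reversal i j c) = length c" using len_reversal ij by blast
  have "fold (\<lambda>(i, j) b. reversal i j b) rs (reversal i j c @ d)
        = fold (\<lambda>(i, j) b. reversal i j b) rs (reversal i j c) @ d"
    using Cons.IH Cons(2) l by auto
  thus ?case using r reversal_append[OF ij] by simp
qed

lemma sortable:
  "signed_perm t b \<Longrightarrow> \<exists>rs. (\<forall>(i, j) \<in> set rs. 1 \<le> i \<and> i \<le> j \<and> j \<le> t) \<and>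
      fold (\<lambda>(i, j) b. reversal i j b) rs b = identity_sp t"
proof (induction t arbitrary: b)
  case 0
  hence "b = []" unfolding signed_perm_def by simp
  thus ?case by (intro exI[of _ "[]"]) (simp add: identity_sp_def)
next
  case (Suc t)
  have lb: "length b = Suc t" using Suc(2) signed_perm_def by simp
  have "int (Suc t) \<in> set (map abs b)" using Suc(2) unfolding signed_perm_def by simp
  then obtain x where x: "x \<in> set b" "abs x = int (Suc t)" by auto
  then obtain j0 where j0: "j0 < Suc t" "b ! j0 = x" using lb by (metis in_set_conv_nth)
  define b1 where "b1 = reversal (Suc j0) (Suc t) b"
  have sp1: "signed_perm (Suc t) b1" unfolding b1_def using sp_reversal Suc(2) j0 by simp
  have "b1 ! t = - b ! (Suc j0 + Suc t - 2 - t)"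
    unfolding b1_def using reversal_nth[of "Suc j0" "Suc t" b t] j0 lb by simp
  hence b1t: "b1 ! t = - x" using j0 by simp
  obtain b2 rs0 where sp2: "signed_perm (Suc t) b2" and b2t: "b2 ! t = int (Suc t)"
    and rs0: "\<forall>(i, j) \<in> set rs0. 1 \<le> i \<and> i \<le> j \<and> j \<le> Suc t"
    and f0: "fold (\<lambda>(i, j) b. reversal i j b) rs0 b = b2"
  proof (cases "x < 0")
    case True
    hence "b1 ! t = int (Suc t)" using b1t x(2) by simp
    thus ?thesis using that[of b1 "[(Suc j0, Suc t)]"] sp1 j0 b1_def by simp
  next
    case False
    define b2 where "b2 = reversal (Suc t) (Suc t) b1"
    have l1: "length b1 = Suc t" using sp1 signed_perm_def by simp
    have "b2 ! t = - b1 ! t" unfolding b2_def using reversal_nth[of "Suc t" "Suc t" b1 t] l1 by simp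
    hence "b2 ! t = int (Suc t)" using b1t x(2) False by simp
    moreover have "signed_perm (Suc t) b2" unfolding b2_def using sp_reversal[OF sp1] by simp
    ultimately show ?thesis using that[of b2 "[(Suc j0, Suc t), (Suc t, Suc t)]"] j0 b1_def b2_def by simp
  qed
  have l2: "length b2 = Suc t" using sp2 signed_perm_def by simp
  define c where "c = take t b2"
  have dt: "drop t b2 = [b2 ! t]" using Cons_nth_drop_Suc[of t b2] l2 by simp
  have "take t b2 @ drop t b2 = b2" by (rule append_take_drop_id)
  hence b2c: "b2 = c @ [int (Suc t)]" unfolding c_def dt b2t by simp
  have lc: "length c = t" unfolding c_def using l2 by simp
  have d2: "distinct (map abs b2)" and s2: "set (map abs b2) = {1..int (Suc t)}"
    using sp2 unfolding signed_perm_def by auto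
  have dc: "distinct (map abs c)" and nin: "int (Suc t) \<notin> set (map abs c)"
    using d2 unfolding b2c by auto
  have "set (map abs b2) = insert (int (Suc t)) (set (map abs c))" unfolding b2c by simp
  hence "set (map abs c) = {1..int (Suc t)} - {int (Suc t)}"
    using s2 nin by (metis Diff_insert_absorb)
  also have "\<dots> = {1..int t}" by auto
  finally have "signed_perm t c" unfolding signed_perm_def using lc dc by simp
  then obtain rs where rs: "\<forall>(i, j) \<in> set rs. 1 \<le> i \<and> i \<le> j \<and> j \<le> t"
    and fc: "fold (\<lambda>(i, j) b. reversal i j b) rs c = identity_sp t" using Suc.IH by blast
  have "fold (\<lambda>(i, j) b. reversal i j b) rs b2 = identity_sp t @ [int (Suc t)]"
    unfolding b2c using fold_append[of rs c] rs lc fc by simp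
  also have "\<dots> = identity_sp (Suc t)" unfolding identity_sp_def by simp
  finally have "fold (\<lambda>(i, j) b. reversal i j b) (rs0 @ rs) b = identity_sp (Suc t)"
    using f0 by simp
  moreover have "\<forall>(i, j) \<in> set (rs0 @ rs). 1 \<le> i \<and> i \<le> j \<and> j \<le> Suc t" using rs0 rs by auto
  ultimately show ?case by blast
qed

theorem theorem4:
  fixes n :: nat and a :: "int list"
  assumes "signed_perm n a"
  shows "real (reversal_distance a) \<ge>
    (real (2 * n + 1) - real (num_cycles (p_r n \<circ> s_tilde a) {-int n..int n})) / 2"
proof -
  have la: "length a = n" using assms signed_perm_def by simp
  define P where "P = (\<lambda>k. \<exists>rs :: (nat \<times> nat) list. length rs = k \<and>
      (\<forall>(i, j) \<in> set rs. 1 \<le> i \<and> i \<le> j \<and> j \<le> length a) \<and>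
      fold (\<lambda>(i, j) b. reversal i j b) rs a = identity_sp (length a))"
  obtain rs0 where "(\<forall>(i, j) \<in> set rs0. 1 \<le> i \<and> i \<le> j \<and> j \<le> n) \<and>
      fold (\<lambda>(i, j) b. reversal i j b) rs0 a = identity_sp n" using sortable[OF assms] by blast
  hence "P (length rs0)" unfolding P_def using la by blast
  hence "P (Least P)" by (rule LeastI)
  then obtain rs where rs: "length rs = Least P"
      "\<forall>(i, j) \<in> set rs. 1 \<le> i \<and> i \<le> j \<and> j \<le> length a"
      "fold (\<lambda>(i, j) b. reversal i j b) rs a = identity_sp (length a)" unfolding P_def by blast
  have rd: "reversal_distance a = length rs" using rs(1) unfolding reversal_distance_def P_def by simp
  have "2 * n + 1 \<le> num_cycles (p_r n \<circ> s_tilde a) {- int n..int n} + 2 * length rs"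
    using bound[OF assms rs(2,3)] .
  hence "real (2 * n + 1) \<le> real (num_cycles (p_r n \<circ> s_tilde a) {- int n..int n}) + 2 * real (length rs)"
    by linarith
  thus ?thesis unfolding rd by simp
qed


end
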